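(* Let $\Pi_q$ be a projective plane (not necessarily Desarguesian) of order $q$, let $\mu\ge 2$ be an integer, and let $s_\mu(2,q)$ be the smallest size of a $(1,\mu)$-saturating set in $\Pi_q$. Put $\delta=1/\sqrt{(q+1)\ln(q+1)}$. Then \[ s_\mu(2,q)\le 2D\sqrt{(q+1)\ln(q+1)}+2 \] holds in each of the following cases: (a) $D=2.4$, if $\mu=2$ and $q\ge 97$; (b) $D=2.6$, if $\mu=3$ and $q\ge 181$; (c) $D=2.8$, if $\mu=4$ and $q\ge 125$; (d) $D=\mu+1$, if $\mu\le\sqrt{q}$ and $q\ge 4$; (e) $D=2\mu-1$, if $\mu\le \frac12\big((1-\delta)q-\delta+1\big)+1$ and $q\ge 3$.
   Context: A point set $S\subset\Pi_q$ is $(1,\mu)$-saturating if for every point $Q\in\Pi_q\setminus S$ the number of secants of $S$ through $Q$, counted with multiplicity, is at least $\mu$, where a line $\ell$ meeting $S$ in at least two points is a secant and has multiplicity $\binom{\#(\ell\cap S)}{2}$. Here $\ln$ is the natural logarithm. *)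

theory Defs
  imports Complex_Main
begin

definition projective_plane :: "'a set \<Rightarrow> 'a set set \<Rightarrow> bool" where
  "projective_plane Pts Lns \<longleftrightarrow>
     finite Pts \<and>
     (\<forall>l\<in>Lns. l \<subseteq> Pts) \<and>
     (\<forall>p\<in>Pts. \<forall>r\<in>Pts. p \<noteq> r \<longrightarrow> (\<exists>!l. l \<in> Lns \<and> p \<in> l \<and> r \<in> l)) \<and>
     (\<forall>l\<in>Lns. \<forall>m\<in>Lns. l \<noteq> m \<longrightarrow> (\<exists>!p. p \<in> Pts \<and> p \<in> l \<and> p \<in> m)) \<and>
     (\<exists>F. F \<subseteq> Pts \<and> card F = 4 \<and>
        (\<forall>l\<in>Lns. card (l \<inter> F) \<le> 2))"

definition projective_plane_of_order :: "'a set \<Rightarrow> 'a set set \<Rightarrow> nat \<Rightarrow> bool" where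
  "projective_plane_of_order Pts Lns q \<longleftrightarrow>
     projective_plane Pts Lns \<and> (\<forall>l\<in>Lns. card l = q + 1)"

definition saturating :: "'a set \<Rightarrow> 'a set set \<Rightarrow> nat \<Rightarrow> 'a set \<Rightarrow> bool" where
  "saturating Pts Lns \<mu> S \<longleftrightarrow>
     S \<subseteq> Pts \<and>
     (\<forall>Q\<in>Pts - S.
        (\<Sum>l\<in>{l\<in>Lns. Q \<in> l \<and> card (l \<inter> S) \<ge> 2}. card (l \<inter> S) choose 2) \<ge> \<mu>)"

definition s_min :: "'a set \<Rightarrow> 'a set set \<Rightarrow> nat \<Rightarrow> nat" where
  "s_min Pts Lns \<mu> = (LEAST n. \<exists>S. saturating Pts Lns \<mu> S \<and> card S = n)"

end

theory Submission imports Defs "HOL-Library.FuncSet" begin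


lemma card_small_subsets:
  assumes X: "finite X" and mu: "1 \<le> \<mu>" "\<mu> \<le> card X"
  shows "card {Y. Y \<subseteq> X \<and> card Y < \<mu>} \<le> card X ^ \<mu>"
proof -
  have eq: "{Y. Y \<subseteq> X \<and> card Y < \<mu>} = (\<Union>c\<in>{..<\<mu>}. {Y. Y \<subseteq> X \<and> card Y = c})" by auto
  have "card {Y. Y \<subseteq> X \<and> card Y < \<mu>} \<le> (\<Sum>c<\<mu>. card {Y. Y \<subseteq> X \<and> card Y = c})"
    unfolding eq by (rule card_UN_le) simp
  also have "\<dots> = (\<Sum>c<\<mu>. card X choose c)" using n_subsets[OF X] by simp
  also have "\<dots> \<le> (\<Sum>c<\<mu>. card X ^ (\<mu> - 1))"
  proof (rule sum_mono)
    fix c assume c: "c \<in> {..<\<mu>}"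
    have "card X choose c \<le> card X ^ c" using c mu by (intro binomial_le_pow) auto
    also have "\<dots> \<le> card X ^ (\<mu> - 1)" using c mu by (intro power_increasing) auto
    finally show "card X choose c \<le> card X ^ (\<mu> - 1)" .
  qed
  also have "\<dots> = \<mu> * card X ^ (\<mu> - 1)" by simp
  also have "\<dots> \<le> card X * card X ^ (\<mu> - 1)" using mu by simp
  also have "\<dots> = card X ^ \<mu>" using mu by (cases \<mu>) auto
  finally show ?thesis .
qed

lemma bad_count:
  assumes U: "finite U" and XU: "X \<subseteq> U" and mu: "1 \<le> \<mu>" "\<mu> \<le> card X"
  shows "card {b \<in> PiE {..<m} (\<lambda>_. U). card (X \<inter> b ` {..<m}) < \<mu>}
          \<le> card X ^ \<mu> * (card U - card X + (\<mu> - 1)) ^ m"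
proof -
  have X: "finite X" using U XU finite_subset by blast
  define YY where "YY = {Y. Y \<subseteq> X \<and> card Y < \<mu>}"
  have finYY: "finite YY"
  proof (rule finite_subset)
    show "YY \<subseteq> Pow X" unfolding YY_def by auto
  qed (use X in simp)
  have sub: "{b \<in> PiE {..<m} (\<lambda>_. U). card (X \<inter> b ` {..<m}) < \<mu>}
     \<subseteq> (\<Union>Y\<in>YY. PiE {..<m} (\<lambda>_. (U - X) \<union> Y))"
  proof
    fix b assume b: "b \<in> {b \<in> PiE {..<m} (\<lambda>_. U). card (X \<inter> b ` {..<m}) < \<mu>}"
    have "X \<inter> b ` {..<m} \<in> YY" using b YY_def by auto
    moreover have "b \<in> PiE {..<m} (\<lambda>_. (U - X) \<union> (X \<inter> b ` {..<m}))" using b by (auto simp: PiE_def Pi_def)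
    ultimately show "b \<in> (\<Union>Y\<in>YY. PiE {..<m} (\<lambda>_. (U - X) \<union> Y))" by blast
  qed
  have "card {b \<in> PiE {..<m} (\<lambda>_. U). card (X \<inter> b ` {..<m}) < \<mu>}
      \<le> card (\<Union>Y\<in>YY. PiE {..<m} (\<lambda>_. (U - X) \<union> Y))"
  proof (rule card_mono[OF _ sub])
    have "\<And>Y. Y \<in> YY \<Longrightarrow> finite (PiE {..<m} (\<lambda>_. (U - X) \<union> Y))"
      using U X YY_def finite_subset by (intro finite_PiE) auto
    thus "finite (\<Union>Y\<in>YY. PiE {..<m} (\<lambda>_. (U - X) \<union> Y))" using finYY by blast
  qed
  also have "\<dots> \<le> (\<Sum>Y\<in>YY. card (PiE {..<m} (\<lambda>_. (U - X) \<union> Y)))"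
    by (rule card_UN_le[OF finYY])
  also have "\<dots> \<le> (\<Sum>Y\<in>YY. (card U - card X + (\<mu> - 1)) ^ m)"
  proof (rule sum_mono)
    fix Y assume Y: "Y \<in> YY"
    have "card ((U - X) \<union> Y) \<le> card (U - X) + card Y" by (rule card_Un_le)
    also have "\<dots> \<le> card U - card X + (\<mu> - 1)"
      using Y YY_def card_Diff_subset[OF X XU] by auto
    finally have "card ((U - X) \<union> Y) \<le> card U - card X + (\<mu> - 1)" .
    thus "card (PiE {..<m} (\<lambda>_. (U - X) \<union> Y)) \<le> (card U - card X + (\<mu> - 1)) ^ m"
      by (simp add: card_PiE power_mono)
  qed
  also have "\<dots> = card YY * (card U - card X + (\<mu> - 1)) ^ m" by simp
  also have "\<dots> \<le> card X ^ \<mu> * (card U - card X + (\<mu> - 1)) ^ m"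
    using card_small_subsets[OF X mu] YY_def by (intro mult_right_mono) auto
  finally show ?thesis .
qed



lemma num_main:
  fixes k \<mu> q :: nat
  assumes mu: "1 \<le> \<mu>" and k: "\<mu> + 1 \<le> k" "k \<le> q"
    and H: "real k * (real k + 1 - real \<mu>) > (real \<mu> + 2) * real q * ln (real q + 1)"
  shows "real ((q+1)^2 * (k^\<mu> * (q - k + (\<mu>-1))^k)) < real (q^k)"
proof -
  define n where "n = real q + 1"
  define x where "x = (real k + 1 - real \<mu>) / real q"
  have q0: "real q > 0" using k by simp
  have n1: "n > 1" using q0 n_def by simp
  have x0: "0 \<le> x" using k q0 x_def by simp
  have eqx: "real (q - k + (\<mu>-1)) = real q * (1 - x)"
    using k mu q0 by (simp add: x_def field_simps of_nat_diff)
  have x1: "0 \<le> 1 - x" using eqx q0 by (metis of_nat_0_le_iff zero_le_mult_iff not_le)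
  have "(1 - x) ^ k \<le> exp (-x) ^ k"
    using x1 by (intro power_mono) (auto simp: exp_ge_add_one_self [of "-x", simplified])
  also have "\<dots> = exp (- (real k * x))" by (simp add: exp_of_nat_mult[symmetric])
  finally have e1: "(1 - x) ^ k \<le> exp (- (real k * x))" .
  have kx: "real k * x > (real \<mu> + 2) * ln n"
    using H q0 unfolding x_def n_def by (simp add: field_simps)
  have "exp (- (real k * x)) < exp (- ((real \<mu> + 2) * ln n))" using kx by simp
  also have "\<dots> = 1 / n ^ (\<mu> + 2)"
  proof -
    have "exp ((real \<mu> + 2) * ln n) = exp (real (\<mu>+2) * ln n)" by simp
    also have "\<dots> = exp (ln n) ^ (\<mu>+2)" by (rule exp_of_nat_mult)
    also have "\<dots> = n ^ (\<mu>+2)" using n1 by simp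
    finally have "exp ((real \<mu> + 2) * ln n) = n ^ (\<mu>+2)" .
    thus ?thesis by (simp only: exp_minus) (simp add: inverse_eq_divide)
  qed
  finally have e2: "exp (- (real k * x)) < 1 / n ^ (\<mu> + 2)" .
  have kn: "real k ^ \<mu> \<le> n ^ \<mu>" using k n_def by (intro power_mono) auto
  have "real ((q+1)^2 * (k^\<mu> * (q - k + (\<mu>-1))^k)) = n^2 * real k ^ \<mu> * (real q ^ k * (1 - x) ^ k)"
  proof -
    have "real ((q+1)^2 * (k^\<mu> * (q - k + (\<mu>-1))^k)) = real (q+1)^2 * real k ^ \<mu> * real (q - k + (\<mu>-1)) ^ k"
      by simp
    also have "\<dots> = n^2 * real k ^ \<mu> * (real q * (1 - x)) ^ k" by (simp only: eqx) (simp add: n_def)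
    finally show ?thesis by (simp add: power_mult_distrib)
  qed
  also have "\<dots> \<le> n^2 * n ^ \<mu> * (real q ^ k * exp (- (real k * x)))"
    using kn e1 x1 n1 by (intro mult_mono) auto
  also have "\<dots> < n^2 * n ^ \<mu> * (real q ^ k * (1 / n ^ (\<mu> + 2)))"
    using e2 n1 q0 by (intro mult_strict_left_mono) auto
  also have "\<dots> = real q ^ k" using n1 by (simp add: field_simps power_add power2_eq_square)
  finally show ?thesis by simp
qed



lemma card_insert_Suc: "card (insert a B) \<le> Suc (card B)"
  by (cases "finite B") (auto simp: card_insert_if)

locale ppo =
  fixes Pts :: "'a set" and Lns :: "'a set set" and q :: nat
  assumes plane: "projective_plane_of_order Pts Lns q"
begin

lemma finPts: "finite Pts"
  using plane by (simp add: projective_plane_of_order_def projective_plane_def)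

lemma line_sub: "l \<in> Lns \<Longrightarrow> l \<subseteq> Pts"
  using plane by (simp add: projective_plane_of_order_def projective_plane_def)

lemma finLns: "finite Lns"
proof -
  have "Lns \<subseteq> Pow Pts" using line_sub by blast
  thus ?thesis using finPts finite_subset by blast
qed

lemma finline: "l \<in> Lns \<Longrightarrow> finite l"
  using line_sub finPts finite_subset by blast

lemma card_line: "l \<in> Lns \<Longrightarrow> card l = q + 1"
  using plane by (simp add: projective_plane_of_order_def)

lemma line_ex1: "p \<in> Pts \<Longrightarrow> r \<in> Pts \<Longrightarrow> p \<noteq> r \<Longrightarrow> \<exists>!l. l \<in> Lns \<and> p \<in> l \<and> r \<in> l"
  using plane by (simp add: projective_plane_of_order_def projective_plane_def)

lemma meet_ex1: "l \<in> Lns \<Longrightarrow> m \<in> Lns \<Longrightarrow> l \<noteq> m \<Longrightarrow> \<exists>!p. p \<in> Pts \<and> p \<in> l \<and> p \<in> m"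
  using plane by (simp add: projective_plane_of_order_def projective_plane_def)

lemma uniq_line: "l \<in> Lns \<Longrightarrow> m \<in> Lns \<Longrightarrow> p \<in> l \<Longrightarrow> p \<in> m \<Longrightarrow> r \<in> l \<Longrightarrow> r \<in> m \<Longrightarrow> p \<noteq> r \<Longrightarrow> l = m"
  using line_ex1[of p r] line_sub by blast

definition joinl :: "'a \<Rightarrow> 'a \<Rightarrow> 'a set" where
  "joinl p r = (THE l. l \<in> Lns \<and> p \<in> l \<and> r \<in> l)"

lemma joinl: assumes "p \<in> Pts" "r \<in> Pts" "p \<noteq> r"
  shows "joinl p r \<in> Lns" "p \<in> joinl p r" "r \<in> joinl p r"
  using theI'[OF line_ex1[OF assms]] unfolding joinl_def by auto

lemma joinl_eq: assumes "p \<in> Pts" "r \<in> Pts" "p \<noteq> r" "l \<in> Lns" "p \<in> l" "r \<in> l"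
  shows "joinl p r = l"
  using joinl[OF assms(1-3)] assms uniq_line by blast

definition projpt :: "'a set \<Rightarrow> 'a \<Rightarrow> 'a \<Rightarrow> 'a" where
  "projpt l2 Q a = (THE y. y \<in> l2 \<and> y \<in> joinl Q a)"

lemma exists_config:
  obtains l1 l2 o1 where "l1 \<in> Lns" "l2 \<in> Lns" "l1 \<noteq> l2" "o1 \<in> Pts" "o1 \<notin> l1"
proof -
  obtain F where F: "F \<subseteq> Pts" "card F = 4" "\<forall>l\<in>Lns. card (l \<inter> F) \<le> 2"
    using plane by (auto simp: projective_plane_of_order_def projective_plane_def)
  have "finite F" using F(2) card.infinite by fastforce
  obtain x y z where xyz: "x \<in> F" "y \<in> F" "z \<in> F" "x \<noteq> y" "x \<noteq> z" "y \<noteq> z"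
  proof -
    obtain xs where "set xs = F" "distinct xs" using \<open>finite F\<close> finite_distinct_list by blast
    hence "length xs = 4" using F(2) distinct_card by fastforce
    then show ?thesis using that[of "xs!0" "xs!1" "xs!2"] \<open>set xs = F\<close> \<open>distinct xs\<close>
      by (auto simp: nth_eq_iff_index_eq)
  qed
  have P: "x \<in> Pts" "y \<in> Pts" "z \<in> Pts" using xyz F(1) by auto
  define l1 where "l1 = joinl x y"
  define l2 where "l2 = joinl x z"
  have l1: "l1 \<in> Lns" "x \<in> l1" "y \<in> l1" using joinl[OF P(1,2) xyz(4)] l1_def by auto
  have l2: "l2 \<in> Lns" "x \<in> l2" "z \<in> l2" using joinl[OF P(1,3) xyz(5)] l2_def by auto
  have zn: "z \<notin> l1"
  proof
    assume "z \<in> l1"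
    hence "{x,y,z} \<subseteq> l1 \<inter> F" using l1 xyz by auto
    hence "card {x,y,z} \<le> card (l1 \<inter> F)" using \<open>finite F\<close> by (simp add: card_mono)
    moreover have "card {x,y,z} = 3" using xyz by auto
    ultimately show False using F(3) l1(1) by fastforce
  qed
  hence "l1 \<noteq> l2" using l2 by auto
  thus ?thesis using that l1 l2 zn P by blast
qed


lemma meet_ex: "l \<in> Lns \<Longrightarrow> m \<in> Lns \<Longrightarrow> l \<noteq> m \<Longrightarrow> \<exists>p. p \<in> l \<and> p \<in> m"
  using meet_ex1 by blast

lemma meet_uniq: "l \<in> Lns \<Longrightarrow> m \<in> Lns \<Longrightarrow> l \<noteq> m \<Longrightarrow> p \<in> l \<Longrightarrow> p \<in> m \<Longrightarrow> r \<in> l \<Longrightarrow> r \<in> m \<Longrightarrow> p = r"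
  using uniq_line by blast

lemma card_Pts: "card Pts \<le> (q+1)^2"
proof -
  obtain l1 l2 o1 where c: "l1 \<in> Lns" "l2 \<in> Lns" "l1 \<noteq> l2" "o1 \<in> Pts" "o1 \<notin> l1"
    by (rule exists_config)
  have sub: "Pts \<subseteq> insert o1 (\<Union>x\<in>l1. joinl o1 x - {o1})"
  proof
    fix Z assume Z: "Z \<in> Pts"
    show "Z \<in> insert o1 (\<Union>x\<in>l1. joinl o1 x - {o1})"
    proof (cases "Z = o1")
      case False
      have j: "joinl o1 Z \<in> Lns" "o1 \<in> joinl o1 Z" "Z \<in> joinl o1 Z" using joinl[OF c(4) Z] False by auto
      hence "joinl o1 Z \<noteq> l1" using c by auto
      then obtain x where x: "x \<in> joinl o1 Z" "x \<in> l1" using meet_ex[OF j(1) c(1)] by blast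
      have "x \<in> Pts" using x c line_sub by auto
      have "x \<noteq> o1" using x c by auto
      hence "joinl o1 x = joinl o1 Z" using joinl_eq[OF c(4) \<open>x \<in> Pts\<close>] j x by auto
      thus ?thesis using x j False by auto
    qed simp
  qed
  have "card Pts \<le> card (insert o1 (\<Union>x\<in>l1. joinl o1 x - {o1}))"
  proof (rule card_mono[OF _ sub])
    have "\<forall>x\<in>l1. finite (joinl o1 x - {o1})"
    proof
      fix x assume "x \<in> l1"
      hence "x \<in> Pts" "x \<noteq> o1" using c line_sub by auto
      thus "finite (joinl o1 x - {o1})" using joinl(1)[OF c(4)] finline by auto
    qed
    thus "finite (insert o1 (\<Union>x\<in>l1. joinl o1 x - {o1}))" using finline c by auto
  qed
  also have "\<dots> \<le> Suc (card (\<Union>x\<in>l1. joinl o1 x - {o1}))" by (rule card_insert_Suc)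
  also have "card (\<Union>x\<in>l1. joinl o1 x - {o1}) \<le> (\<Sum>x\<in>l1. card (joinl o1 x - {o1}))"
    by (rule card_UN_le) (use finline c in auto)
  also have "\<dots> = (\<Sum>x\<in>l1. q)"
  proof (rule sum.cong)
    fix x assume "x \<in> l1"
    hence "x \<in> Pts" "x \<noteq> o1" using c line_sub by auto
    hence "joinl o1 x \<in> Lns" "o1 \<in> joinl o1 x" using joinl c by auto
    thus "card (joinl o1 x - {o1}) = q" using card_line finline by simp
  qed simp
  also have "\<dots> = (q+1) * q" using card_line c by simp
  finally show ?thesis by (simp add: power2_eq_square)
qed

lemma projpt:
  assumes l: "l1 \<in> Lns" "l2 \<in> Lns" "l1 \<noteq> l2" "P \<in> l1" "P \<in> l2"
    and Q: "Q \<in> Pts" "Q \<notin> l1" "Q \<notin> l2" and a: "a \<in> l1" "a \<noteq> P"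
  shows "projpt l2 Q a \<in> l2" "projpt l2 Q a \<in> joinl Q a" "projpt l2 Q a \<noteq> P"
    "joinl Q a \<in> Lns" "Q \<in> joinl Q a" "a \<in> joinl Q a"
proof -
  have aP: "a \<in> Pts" using a l line_sub by auto
  have Qa: "Q \<noteq> a" using Q a by auto
  note j = joinl[OF Q(1) aP Qa]
  have ne: "joinl Q a \<noteq> l2" using j Q by auto
  have ex1: "\<exists>!y. y \<in> l2 \<and> y \<in> joinl Q a"
    using meet_ex[OF l(2) j(1)] meet_uniq[OF l(2) j(1)] ne by metis
  have t: "projpt l2 Q a \<in> l2 \<and> projpt l2 Q a \<in> joinl Q a"
    unfolding projpt_def by (rule theI'[OF ex1])
  show "projpt l2 Q a \<in> l2" "projpt l2 Q a \<in> joinl Q a" using t by auto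
  show "projpt l2 Q a \<noteq> P"
  proof
    assume "projpt l2 Q a = P"
    hence "P \<in> joinl Q a" using t by simp
    hence "joinl Q a = l1" using uniq_line[OF j(1) l(1) _ l(4) _ a(1)] j a by metis
    thus False using j Q by auto
  qed
  show "joinl Q a \<in> Lns" "Q \<in> joinl Q a" "a \<in> joinl Q a" using j by auto
qed

lemma projpt_inj:
  assumes l: "l1 \<in> Lns" "l2 \<in> Lns" "l1 \<noteq> l2" "P \<in> l1" "P \<in> l2"
    and Q: "Q \<in> Pts" "Q \<notin> l1" "Q \<notin> l2"
  shows "inj_on (projpt l2 Q) (l1 - {P})"
proof
  fix a b assume a: "a \<in> l1 - {P}" and b: "b \<in> l1 - {P}" and e: "projpt l2 Q a = projpt l2 Q b"
  note pa = projpt[OF l Q, of a] and pb = projpt[OF l Q, of b]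
  define y where "y = projpt l2 Q a"
  have yP: "y \<in> Pts" "y \<noteq> Q" using pa a l line_sub Q y_def by auto
  have "joinl Q y = joinl Q a" using joinl_eq[OF Q(1) yP(1) yP(2)[symmetric]] pa a y_def by auto
  moreover have "joinl Q y = joinl Q b" using joinl_eq[OF Q(1) yP(1) yP(2)[symmetric]] pb b e y_def by auto
  ultimately have "b \<in> joinl Q a" using pb b by auto
  moreover have "joinl Q a \<noteq> l1" using pa a Q by auto
  ultimately show "a = b" using meet_uniq[of "joinl Q a" l1 a b] pa a b l by auto
qed


lemma sum_ge_single:
  assumes S: "S \<subseteq> Pts" and l: "l \<in> Lns" "Q \<in> l" and T: "T \<subseteq> l \<inter> S"
    and mu1: "1 \<le> \<mu>" and cT: "\<mu> \<le> card T choose 2"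
  shows "\<mu> \<le> (\<Sum>l\<in>{l\<in>Lns. Q \<in> l \<and> card (l \<inter> S) \<ge> 2}. card (l \<inter> S) choose 2)"
proof -
  have fin: "finite (l \<inter> S)" using finline l by auto
  have le: "card T \<le> card (l \<inter> S)" using card_mono[OF fin T] .
  have "card T \<ge> 2"
  proof (rule ccontr)
    assume "\<not> card T \<ge> 2"
    hence "card T < 2" by simp
    hence "card T choose 2 = 0" by (rule binomial_eq_0)
    thus False using cT mu1 by linarith
  qed
  hence mem: "l \<in> {l\<in>Lns. Q \<in> l \<and> card (l \<inter> S) \<ge> 2}" using le l by auto
  have "\<mu> \<le> card (l \<inter> S) choose 2" using cT binomial_right_mono[OF le] by (rule le_trans)
  also have "\<dots> \<le> (\<Sum>l\<in>{l\<in>Lns. Q \<in> l \<and> card (l \<inter> S) \<ge> 2}. card (l \<inter> S) choose 2)"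
    by (rule member_le_sum[OF mem]) (use finLns in auto)
  finally show ?thesis .
qed

lemma sat_core:
  assumes l: "l1 \<in> Lns" "l2 \<in> Lns" "l1 \<noteq> l2" "P \<in> l1" "P \<in> l2"
    and A: "A \<subseteq> l1 - {P}" and B0: "B0 \<subseteq> l2" and Y: "Y \<subseteq> l2 - {P}"
    and mu1: "1 \<le> \<mu>"
    and cA: "\<mu> \<le> card A choose 2" and cB: "\<mu> \<le> card B0 choose 2"
    and H: "\<forall>Q \<in> Pts - (l1 \<union> l2). \<mu> \<le> card (projpt l2 Q ` A \<inter> Y)"
  shows "saturating Pts Lns \<mu> (A \<union> B0 \<union> Y)"
proof -
  define S where "S = A \<union> B0 \<union> Y"
  have SP: "S \<subseteq> Pts" using A B0 Y l line_sub unfolding S_def by blast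
  have "\<mu> \<le> (\<Sum>l\<in>{l\<in>Lns. Q \<in> l \<and> card (l \<inter> S) \<ge> 2}. card (l \<inter> S) choose 2)"
    if Q: "Q \<in> Pts - S" for Q
  proof (cases "Q \<in> l1")
    case True
    show ?thesis by (rule sum_ge_single[OF SP l(1) True _ mu1 cA]) (use A S_def in auto)
  next
    case n1: False
    show ?thesis
    proof (cases "Q \<in> l2")
      case True
      show ?thesis by (rule sum_ge_single[OF SP l(2) True _ mu1 cB]) (use B0 S_def in auto)
    next
      case n2: False
      have QP: "Q \<in> Pts" using Q by auto
      define Z where "Z = projpt l2 Q ` A \<inter> Y"
      define g where "g = joinl Q"
      define LL where "LL = {l\<in>Lns. Q \<in> l \<and> card (l \<inter> S) \<ge> 2}"
      have Zl: "g y \<in> LL \<and> y \<in> g y" if y: "y \<in> Z" for y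
      proof -
        obtain a where a: "a \<in> A" "y = projpt l2 Q a" "y \<in> Y" using y Z_def by auto
        have a1: "a \<in> l1" "a \<noteq> P" using a A by auto
        note pa = projpt[OF l QP n1 n2 a1]
        have yP: "y \<in> Pts" "y \<noteq> Q" using pa a l line_sub n2 by auto
        have gy: "g y = joinl Q a" unfolding g_def
          using joinl_eq[OF QP yP(1) yP(2)[symmetric]] pa a by auto
        have "a \<notin> l2" using meet_uniq[OF l(1) l(2) l(3) a1(1) _ l(4) l(5)] a1 by auto
        hence ay: "a \<noteq> y" using pa a by auto
        have "{a, y} \<subseteq> g y \<inter> S" using gy pa a S_def by auto
        moreover have "finite (g y \<inter> S)" using gy pa finline by auto
        ultimately have "card {a,y} \<le> card (g y \<inter> S)" using card_mono by blast
        hence "2 \<le> card (g y \<inter> S)" using ay by simp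
        thus ?thesis using gy pa LL_def a by auto
      qed
      have inj: "inj_on g Z"
      proof
        fix y y' assume y: "y \<in> Z" and y': "y' \<in> Z" and e: "g y = g y'"
        have "y \<in> l2" "y' \<in> l2" using y y' Y Z_def by auto
        moreover have "g y \<in> Lns" "g y \<noteq> l2" using Zl[OF y] n2 LL_def by auto
        moreover have "y \<in> g y" "y' \<in> g y" using Zl[OF y] Zl[OF y'] e by auto
        ultimately show "y = y'" using meet_uniq[of "g y" l2] l by blast
      qed
      have "\<mu> \<le> card Z" using H Q n1 n2 Z_def S_def by auto
      also have "card Z = card (g ` Z)" using card_image[OF inj] by simp
      also have "\<dots> = (\<Sum>l\<in>g ` Z. 1)" by simp
      also have "\<dots> \<le> (\<Sum>l\<in>g ` Z. card (l \<inter> S) choose 2)"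
      proof (rule sum_mono)
        fix l assume "l \<in> g ` Z"
        hence "2 \<le> card (l \<inter> S)" using Zl LL_def by auto
        thus "1 \<le> card (l \<inter> S) choose 2"
          by (metis One_nat_def Suc_leI binomial_right_mono le_trans less_one not_less zero_less_binomial_iff)
      qed
      also have "\<dots> \<le> (\<Sum>l\<in>LL. card (l \<inter> S) choose 2)"
        by (rule sum_mono2) (use finLns LL_def Zl in auto)
      finally show ?thesis using LL_def by simp
    qed
  qed
  thus ?thesis unfolding saturating_def S_def[symmetric] using SP by auto
qed


lemma s_min_le: "saturating Pts Lns \<mu> S \<Longrightarrow> s_min Pts Lns \<mu> \<le> card S"
  unfolding s_min_def by (rule Least_le) blast

lemma config2:
  obtains l1 l2 P where "l1 \<in> Lns" "l2 \<in> Lns" "l1 \<noteq> l2" "P \<in> l1" "P \<in> l2"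
    "card (l1 - {P}) = q" "card (l2 - {P}) = q" "finite l2"
proof -
  obtain l1 l2 o1 where c: "l1 \<in> Lns" "l2 \<in> Lns" "l1 \<noteq> l2" by (rule exists_config)
  then obtain P where "P \<in> l1" "P \<in> l2" using meet_ex by blast
  thus ?thesis using that c card_line finline by auto
qed

lemma choose2_ge: "\<mu> \<le> Suc \<mu> choose 2"
proof -
  have "Suc \<mu> choose 2 = (\<mu> choose 1) + (\<mu> choose 2)"
    by (metis Suc_1 binomial_Suc_Suc)
  thus ?thesis by simp
qed

lemma determ:
  assumes mu: "1 \<le> \<mu>" "\<mu> + 1 \<le> q"
  shows "s_min Pts Lns \<mu> \<le> q + \<mu> + 1"
proof -
  obtain l1 l2 P where l: "l1 \<in> Lns" "l2 \<in> Lns" "l1 \<noteq> l2" "P \<in> l1" "P \<in> l2"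
    and c: "card (l1 - {P}) = q" "card (l2 - {P}) = q" "finite l2" by (rule config2)
  obtain B0 where B0: "B0 \<subseteq> l2 - {P}" "card B0 = \<mu> + 1"
    using obtain_subset_with_card_n[of "\<mu>+1" "l2 - {P}"] c mu by auto
  define A where "A = l1 - {P}"
  have cA: "\<mu> \<le> card A choose 2"
    using choose2_ge[of \<mu>] binomial_right_mono[of "Suc \<mu>" q 2] mu c A_def by simp
  have cB: "\<mu> \<le> card B0 choose 2" using choose2_ge[of \<mu>] B0 by simp
  have H: "\<forall>Q \<in> Pts - (l1 \<union> l2). \<mu> \<le> card (projpt l2 Q ` A \<inter> B0)"
  proof
    fix Q assume Q: "Q \<in> Pts - (l1 \<union> l2)"
    have sub: "projpt l2 Q ` A \<subseteq> l2 - {P}" using projpt[OF l, of Q] Q A_def by auto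
    have "card (projpt l2 Q ` A) = q"
      using card_image[OF projpt_inj[OF l, of Q]] Q A_def c by auto
    hence "projpt l2 Q ` A = l2 - {P}" using card_subset_eq[OF _ sub] c by auto
    hence "projpt l2 Q ` A \<inter> B0 = B0" using B0 by auto
    thus "\<mu> \<le> card (projpt l2 Q ` A \<inter> B0)" using B0 by simp
  qed
  have sat: "saturating Pts Lns \<mu> (A \<union> B0 \<union> B0)"
    by (rule sat_core[OF l _ _ _ mu(1) cA cB H]) (use A_def B0 in auto)
  have "s_min Pts Lns \<mu> \<le> card (A \<union> B0 \<union> B0)" by (rule s_min_le[OF sat])
  also have "\<dots> \<le> card A + card B0" by (simp add: card_Un_le)
  finally show ?thesis using c A_def B0 by simp
qed

lemma rand:
  assumes mu: "2 \<le> \<mu>" and k: "\<mu> + 1 \<le> k" "k \<le> q"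
    and H: "real k * (real k + 1 - real \<mu>) > (real \<mu> + 2) * real q * ln (real q + 1)"
  shows "s_min Pts Lns \<mu> \<le> 2 * k + \<mu> + 1"
proof -
  obtain l1 l2 P where l: "l1 \<in> Lns" "l2 \<in> Lns" "l1 \<noteq> l2" "P \<in> l1" "P \<in> l2"
    and c: "card (l1 - {P}) = q" "card (l2 - {P}) = q" "finite l2" by (rule config2)
  obtain A where A: "A \<subseteq> l1 - {P}" "card A = k"
    using obtain_subset_with_card_n[of k "l1 - {P}"] c k by auto
  obtain B0 where B0: "B0 \<subseteq> l2 - {P}" "card B0 = \<mu> + 1"
    using obtain_subset_with_card_n[of "\<mu>+1" "l2 - {P}"] c k by auto
  define U where "U = l2 - {P}"
  have U: "finite U" "card U = q" using c U_def by auto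
  define T where "T = PiE {..<k} (\<lambda>_. U)"
  have finT: "finite T" using U T_def by (simp add: finite_PiE)
  have cT: "card T = q ^ k" using U T_def by (simp add: card_PiE)
  define R where "R = Pts - (l1 \<union> l2)"
  define Bad where "Bad Q = {b \<in> T. card (projpt l2 Q ` A \<inter> b ` {..<k}) < \<mu>}" for Q
  define M where "M = k^\<mu> * (q - k + (\<mu>-1))^k"
  have bQ: "card (Bad Q) \<le> M" if Q: "Q \<in> R" for Q
  proof -
    have QQ: "Q \<in> Pts" "Q \<notin> l1" "Q \<notin> l2" using Q R_def by auto
    have sub: "projpt l2 Q ` A \<subseteq> U"
    proof
      fix y assume "y \<in> projpt l2 Q ` A"
      then obtain a where a: "a \<in> A" "y = projpt l2 Q a" by blast
      hence "a \<in> l1" "a \<noteq> P" using A by auto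
      note pp = projpt[OF l QQ this]
      show "y \<in> U" using pp(1,3) a U_def by auto
    qed
    have cX: "card (projpt l2 Q ` A) = k"
      using card_image[OF inj_on_subset[OF projpt_inj[OF l, of Q] A(1)]] Q A R_def by auto
    show ?thesis
      using bad_count[OF U(1) sub, of \<mu> k] cX U mu k unfolding Bad_def T_def M_def by auto
  qed
  have "card (\<Union>Q\<in>R. Bad Q) \<le> (\<Sum>Q\<in>R. card (Bad Q))"
    by (rule card_UN_le) (use finPts R_def in auto)
  also have "\<dots> \<le> (\<Sum>Q\<in>R. M)" using bQ by (rule sum_mono)
  also have "\<dots> = card R * M" by simp
  also have "\<dots> \<le> (q+1)^2 * M"
  proof -
    have "card R \<le> card Pts" using finPts R_def by (intro card_mono) auto
    thus ?thesis using card_Pts by (intro mult_right_mono) auto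
  qed
  also have "\<dots> < q ^ k"
    using num_main[of \<mu> k q] mu k H unfolding M_def by (simp only: of_nat_less_iff)
  finally have lt: "card (\<Union>Q\<in>R. Bad Q) < card T" using cT by simp
  have "\<not> T \<subseteq> (\<Union>Q\<in>R. Bad Q)"
  proof
    assume TB: "T \<subseteq> (\<Union>Q\<in>R. Bad Q)"
    have "card T \<le> card (\<Union>Q\<in>R. Bad Q)"
    proof (rule card_mono[OF _ TB])
      show "finite (\<Union>Q\<in>R. Bad Q)"
        by (rule finite_subset[OF _ finT]) (auto simp: Bad_def)
    qed
    thus False using lt by simp
  qed
  then obtain b where b: "b \<in> T" "\<And>Q. Q \<in> R \<Longrightarrow> b \<notin> Bad Q" by blast
  define Y where "Y = b ` {..<k}"
  have Y: "Y \<subseteq> l2 - {P}" using b(1) T_def U_def Y_def by auto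
  have cA: "\<mu> \<le> card A choose 2"
    using choose2_ge[of \<mu>] binomial_right_mono[of "Suc \<mu>" k 2] k A by simp
  have cB: "\<mu> \<le> card B0 choose 2" using choose2_ge[of \<mu>] B0 by simp
  have HH: "\<forall>Q \<in> Pts - (l1 \<union> l2). \<mu> \<le> card (projpt l2 Q ` A \<inter> Y)"
    using b Y_def R_def Bad_def by (auto simp: not_less)
  have sat: "saturating Pts Lns \<mu> (A \<union> B0 \<union> Y)"
    by (rule sat_core[OF l A(1) _ Y _ cA cB HH]) (use B0 mu in auto)
  have "s_min Pts Lns \<mu> \<le> card (A \<union> B0 \<union> Y)" by (rule s_min_le[OF sat])
  also have "\<dots> \<le> card A + card B0 + card Y" by (meson card_Un_le add_right_mono le_trans)
  also have "card Y \<le> k" unfolding Y_def using card_image_le[of "{..<k}" b] by simp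
  finally show ?thesis using A B0 by simp
qed

lemma core:
  fixes c D L :: real
  assumes Ldef: "L = sqrt ((real q + 1) * ln (real q + 1))"
    and mu: "2 \<le> \<mu>" "\<mu> + 1 \<le> q" and c0: "c > 0"
    and cL: "c * L > real \<mu>" and c3: "c * c - c * (real \<mu> - 1) / L \<ge> real \<mu> + 2"
    and d1: "2 * (D - c) * L \<ge> real \<mu> + 1" and d2: "real \<mu> \<le> (2 * D - c) * L"
  shows "real (s_min Pts Lns \<mu>) \<le> 2 * D * L + 2"
proof -
  define n where "n = real q + 1"
  have n1: "n > 1" using mu n_def by simp
  have lnpos: "ln n > 0" using n1 by simp
  have nn: "n * ln n \<ge> 0" using n1 lnpos by simp
  have L2: "L * L = n * ln n" unfolding Ldef n_def[symmetric] using nn by simp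
  have L0: "L > 0" using Ldef n_def n1 lnpos by simp
  define k where "k = nat \<lceil>c * L\<rceil>"
  have k1: "real k \<ge> c * L" unfolding k_def by linarith
  have cLp: "c * L > 0" using c0 L0 by simp
  have "-1 < c * L" using cLp by linarith
  hence cpos: "0 \<le> \<lceil>c * L\<rceil>" by simp
  have "real k = real_of_int \<lceil>c * L\<rceil>" unfolding k_def using cpos by simp
  hence k2: "real k < c * L + 1" using ceiling_correct[of "c * L"] by linarith
  show ?thesis
  proof (cases "q < k")
    case True
    have "real (s_min Pts Lns \<mu>) \<le> real q + real \<mu> + 1" using determ[of \<mu>] mu by simp
    also have "\<dots> < c * L + real \<mu> + 2" using True k2 by simp
    also have "\<dots> \<le> 2 * D * L + 2" using d2 by (simp add: algebra_simps)
    finally show ?thesis by simp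
  next
    case False
    have kq: "k \<le> q" using False by simp
    have kmu: "\<mu> + 1 \<le> k" using k1 cL by linarith
    have eq: "c * c - c * (real \<mu> - 1) / L = c * (c * L - (real \<mu> - 1)) / L"
      using L0 by (simp add: field_simps)
    have "c * (c * L - (real \<mu> - 1)) / L > 0" using c3 eq by linarith
    hence pos: "c * L - (real \<mu> - 1) > 0" using c0 L0 by (simp add: zero_less_divide_iff zero_less_mult_iff)
    have a1: "(c * L) * (c * L + 1 - real \<mu>) \<le> real k * (real k + 1 - real \<mu>)"
      using k1 pos by (intro mult_mono) auto
    have a2: "(c * L) * (c * L + 1 - real \<mu>) = (L * L) * (c * c - c * (real \<mu> - 1) / L)"
      using L0 by (simp add: field_simps)
    have a3: "(L * L) * (real \<mu> + 2) \<le> (L * L) * (c * c - c * (real \<mu> - 1) / L)"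
      using c3 by (intro mult_left_mono) auto
    have a4: "(real \<mu> + 2) * (n * ln n) = (L * L) * (real \<mu> + 2)" using L2 by simp
    have a: "real k * (real k + 1 - real \<mu>) \<ge> (real \<mu> + 2) * (n * ln n)"
      using a1 a2 a3 a4 by linarith
    have p: "(real \<mu> + 2) * ln n > 0" using lnpos by simp
    have "(real \<mu> + 2) * ln n * real q < (real \<mu> + 2) * ln n * n"
      by (rule mult_strict_left_mono) (use n_def p in auto)
    hence "(real \<mu> + 2) * real q * ln n < (real \<mu> + 2) * (n * ln n)"
      by (simp add: algebra_simps)
    hence H: "real k * (real k + 1 - real \<mu>) > (real \<mu> + 2) * real q * ln (real q + 1)"
      using a unfolding n_def by linarith
    have "real (s_min Pts Lns \<mu>) \<le> real (2 * k + \<mu> + 1)" using rand[OF mu(1) kmu kq H] by linarith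
    also have "\<dots> < 2 * (c * L + 1) + real \<mu> + 1" using k2 by simp
    also have "\<dots> \<le> 2 * D * L + 2" using d1 by (simp add: algebra_simps)
    finally show ?thesis by simp
  qed
qed

lemma ln_ge1: "3 \<le> x \<Longrightarrow> 1 \<le> ln (x::real)"
  using exp_le by (subst ln_ge_iff) auto

lemma ln_ge2: "9 \<le> x \<Longrightarrow> 2 \<le> ln (x::real)"
proof -
  assume x: "9 \<le> x"
  have "exp (2::real) = exp 1 * exp 1" by (simp flip: exp_add)
  also have "\<dots> \<le> 3 * 3" using exp_le by (intro mult_mono) auto
  finally have "exp (2::real) \<le> x" using x by simp
  thus ?thesis using x by (subst ln_ge_iff) auto
qed

lemma caseABC:
  fixes D c :: real
  assumes mu: "2 \<le> \<mu>" "\<mu> \<le> 4" and q: "97 \<le> q" and c0: "c > 0"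
    and H: "\<And>L::real. L \<ge> 14 \<Longrightarrow> c * L > real \<mu> \<and> c * c - c * (real \<mu> - 1) / L \<ge> real \<mu> + 2
          \<and> 2 * (D - c) * L \<ge> real \<mu> + 1 \<and> real \<mu> \<le> (2 * D - c) * L"
  shows "real (s_min Pts Lns \<mu>) \<le> 2 * D * sqrt ((real q + 1) * ln (real q + 1)) + 2"
proof -
  define L where "L = sqrt ((real q + 1) * ln (real q + 1))"
  have "ln (real q + 1) \<ge> 2" using q by (intro ln_ge2) simp
  hence "(real q + 1) * ln (real q + 1) \<ge> 98 * 2" using q
    by (intro mult_mono) auto
  hence "L \<ge> sqrt (14^2)" unfolding L_def by (intro real_sqrt_le_mono) simp
  hence L14: "L \<ge> 14" by simp
  note h = H[OF L14]
  show ?thesis unfolding L_def[symmetric]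
    by (rule core[OF L_def mu(1) _ c0]) (use h mu q in auto)
qed

lemma caseDE:
  fixes D :: real
  assumes mu: "2 \<le> \<mu>" "\<mu> + 1 \<le> q" and D: "D \<ge> real \<mu> + 1"
  shows "real (s_min Pts Lns \<mu>) \<le> 2 * D * sqrt ((real q + 1) * ln (real q + 1)) + 2"
proof -
  define L where "L = sqrt ((real q + 1) * ln (real q + 1))"
  define n where "n = real q + 1"
  have n4: "n \<ge> 4" using mu n_def by simp
  have ln1: "ln n \<ge> 1" using n4 by (intro ln_ge1) simp
  have nn: "n * ln n \<ge> n" using ln1 n4 by (metis mult_left_mono mult.right_neutral less_eq_real_def dual_order.trans zero_le_numeral)
  have L2: "L * L = n * ln n" unfolding L_def n_def[symmetric] using nn n4 by simp
  have L0: "L \<ge> 0" unfolding L_def by simp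
  have Lge2: "L \<ge> 2"
  proof (rule ccontr)
    assume "\<not> L \<ge> 2"
    hence "L * L < 2 * 2" using L0 by (intro mult_strict_mono) auto
    thus False using L2 nn n4 by linarith
  qed
  have "real (s_min Pts Lns \<mu>) \<le> 2 * D * L + 2"
  proof (cases "L \<ge> 3")
    case True
    define c where "c = (real \<mu> + 3) / 2"
    have c0: "c > 0" using c_def by simp
    have i1: "c * L > real \<mu>"
    proof -
      have "c * 3 \<le> c * L" using True c0 by simp
      moreover have "c * 3 > real \<mu>" using c_def by simp
      ultimately show ?thesis by linarith
    qed
    have i2: "c * c - c * (real \<mu> - 1) / L \<ge> real \<mu> + 2"
    proof -
      have "(real \<mu> - 1) / L \<le> (real \<mu> - 1) / 2"
        using Lge2 mu by (intro divide_left_mono) auto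
      hence "c * ((real \<mu> - 1) / L) \<le> c * ((real \<mu> - 1) / 2)" using c0 by (intro mult_left_mono) auto
      moreover have "c * c - c * ((real \<mu> - 1) / 2) = real \<mu> + 3" unfolding c_def by (simp add: field_simps)
      ultimately show ?thesis by simp
    qed
    have i3: "2 * (D - c) * L \<ge> real \<mu> + 1"
    proof -
      have "D - c \<ge> (real \<mu> - 1) / 2" using D c_def by simp
      hence "(D - c) * L \<ge> (real \<mu> - 1) / 2 * 3" using True mu
        by (intro mult_mono) auto
      moreover have "real \<mu> \<ge> 2" using mu by simp
      ultimately have "real \<mu> + 1 \<le> 2 * ((D - c) * L)" by (simp add: field_simps)
      thus ?thesis by (simp only: mult.assoc)
    qed
    have i4: "real \<mu> \<le> (2 * D - c) * L"
    proof -
      have "2 * D - c \<ge> real \<mu>" using D c_def by simp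
      hence "(2 * D - c) * L \<ge> real \<mu> * 1" using True by (intro mult_mono) auto
      thus ?thesis by simp
    qed
    show ?thesis by (rule core[OF L_def mu c0 i1 i2 i3 i4])
  next
    case False
    have "n \<le> L * L" using L2 nn by simp
    also have "L * L < 3 * 3" using False L0 by (intro mult_strict_mono) auto
    finally have nq: "real q < 8" using n_def by simp
    have "real (s_min Pts Lns \<mu>) \<le> real q + real \<mu> + 1" using determ[of \<mu>] mu by simp
    also have "\<dots> \<le> 2 * (real \<mu> + 1) * 2 + 2" using nq mu by simp
    also have "\<dots> \<le> 2 * D * L + 2"
    proof -
      have "(real \<mu> + 1) * 2 \<le> D * L" using D Lge2 by (intro mult_mono) auto
      thus ?thesis by simp
    qed
    finally show ?thesis .
  qed
  thus ?thesis unfolding L_def .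
qed

end

lemma divL14: "(L::real) \<ge> 14 \<Longrightarrow> a \<ge> 0 \<Longrightarrow> a / L \<le> a / 14"
  by (intro divide_left_mono) auto

theorem theorem3:
  fixes Pts :: "'a set" and Lns :: "'a set set" and q \<mu> :: nat and \<delta> :: real
  assumes plane: "projective_plane_of_order Pts Lns q"
    and mu: "\<mu> \<ge> 2"
    and delta: "\<delta> = 1 / sqrt ((real q + 1) * ln (real q + 1))"
  shows "(\<mu> = 2 \<and> q \<ge> 97 \<longrightarrow>
            real (s_min Pts Lns \<mu>) \<le> 2 * 2.4 * sqrt ((real q + 1) * ln (real q + 1)) + 2)
       \<and> (\<mu> = 3 \<and> q \<ge> 181 \<longrightarrow>
            real (s_min Pts Lns \<mu>) \<le> 2 * 2.6 * sqrt ((real q + 1) * ln (real q + 1)) + 2)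
       \<and> (\<mu> = 4 \<and> q \<ge> 125 \<longrightarrow>
            real (s_min Pts Lns \<mu>) \<le> 2 * 2.8 * sqrt ((real q + 1) * ln (real q + 1)) + 2)
       \<and> (real \<mu> \<le> sqrt (real q) \<and> q \<ge> 4 \<longrightarrow>
            real (s_min Pts Lns \<mu>) \<le> 2 * (real \<mu> + 1) * sqrt ((real q + 1) * ln (real q + 1)) + 2)
       \<and> (real \<mu> \<le> ((1 - \<delta>) * real q - \<delta> + 1) / 2 + 1 \<and> q \<ge> 3 \<longrightarrow>
            real (s_min Pts Lns \<mu>) \<le> 2 * (2 * real \<mu> - 1) * sqrt ((real q + 1) * ln (real q + 1)) + 2)"
proof -
  interpret ppo Pts Lns q using plane by unfold_locales
  have A: "real (s_min Pts Lns \<mu>) \<le> 2 * 2.4 * sqrt ((real q + 1) * ln (real q + 1)) + 2"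
    if h: "\<mu> = 2" "q \<ge> 97"
  proof (rule caseABC[where \<mu>=\<mu> and c="21/10" and D="2.4"])
    fix L :: real assume L: "L \<ge> 14"
    have "21/10 * (real \<mu> - 1) / L \<le> 21/10 * (real \<mu> - 1) / 14" using h L by (intro divide_left_mono) auto
    thus "21/10 * L > real \<mu> \<and> 21/10 * (21/10) - 21/10 * (real \<mu> - 1) / L \<ge> real \<mu> + 2
          \<and> 2 * (2.4 - 21/10) * L \<ge> real \<mu> + 1 \<and> real \<mu> \<le> (2 * 2.4 - 21/10) * L"
      using L h by simp
  qed (use h in auto)
  have B: "real (s_min Pts Lns \<mu>) \<le> 2 * 2.6 * sqrt ((real q + 1) * ln (real q + 1)) + 2"
    if h: "\<mu> = 3" "q \<ge> 181"
  proof (rule caseABC[where \<mu>=\<mu> and c="235/100" and D="2.6"])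
    fix L :: real assume L: "L \<ge> 14"
    have "235/100 * (real \<mu> - 1) / L \<le> 235/100 * (real \<mu> - 1) / 14" using h L by (intro divide_left_mono) auto
    thus "235/100 * L > real \<mu> \<and> 235/100 * (235/100) - 235/100 * (real \<mu> - 1) / L \<ge> real \<mu> + 2
          \<and> 2 * (2.6 - 235/100) * L \<ge> real \<mu> + 1 \<and> real \<mu> \<le> (2 * 2.6 - 235/100) * L"
      using L h by simp
  qed (use h in auto)
  have C: "real (s_min Pts Lns \<mu>) \<le> 2 * 2.8 * sqrt ((real q + 1) * ln (real q + 1)) + 2"
    if h: "\<mu> = 4" "q \<ge> 125"
  proof (rule caseABC[where \<mu>=\<mu> and c="26/10" and D="2.8"])
    fix L :: real assume L: "L \<ge> 14"
    have "26/10 * (real \<mu> - 1) / L \<le> 26/10 * (real \<mu> - 1) / 14" using h L by (intro divide_left_mono) auto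
    thus "26/10 * L > real \<mu> \<and> 26/10 * (26/10) - 26/10 * (real \<mu> - 1) / L \<ge> real \<mu> + 2
          \<and> 2 * (2.8 - 26/10) * L \<ge> real \<mu> + 1 \<and> real \<mu> \<le> (2 * 2.8 - 26/10) * L"
      using L h by simp
  qed (use h in auto)
  have D: "real (s_min Pts Lns \<mu>) \<le> 2 * (real \<mu> + 1) * sqrt ((real q + 1) * ln (real q + 1)) + 2"
    if h: "real \<mu> \<le> sqrt (real q)" "q \<ge> 4"
  proof (rule caseDE[OF mu])
    have "real q * 3 \<le> real q * real q" using h(2) by (intro mult_left_mono) auto
    hence "real q \<le> (real q - 1)^2" by (simp add: power2_eq_square algebra_simps)
    hence "sqrt (real q) \<le> sqrt ((real q - 1)^2)" by (rule real_sqrt_le_mono)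
    also have "\<dots> = real q - 1" using h(2) by simp
    finally have "real \<mu> \<le> real q - 1" using h(1) by linarith
    thus "\<mu> + 1 \<le> q" by linarith
  qed simp
  have E: "real (s_min Pts Lns \<mu>) \<le> 2 * (2 * real \<mu> - 1) * sqrt ((real q + 1) * ln (real q + 1)) + 2"
    if h: "real \<mu> \<le> ((1 - \<delta>) * real q - \<delta> + 1) / 2 + 1" "q \<ge> 3"
  proof (rule caseDE[OF mu])
    have "(real q + 1) * ln (real q + 1) > 0" using h(2) by simp
    hence d0: "\<delta> > 0" using delta by simp
    have "((1 - \<delta>) * real q - \<delta> + 1) / 2 + 1 = (real q + 3) / 2 - \<delta> * (real q + 1) / 2"
      by (simp add: field_simps)
    also have "\<dots> < (real q + 3) / 2"
    proof -
      have "\<delta> * (real q + 1) > 0" using d0 by simp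
      thus ?thesis by linarith
    qed
    finally have "real \<mu> < (real q + 3) / 2" using h(1) by (rule le_less_trans[rotated])
    hence "2 * real \<mu> < real q + 3" by (simp add: field_simps)
    hence "2 * \<mu> < q + 3" by linarith
    thus "\<mu> + 1 \<le> q" using h(2) mu by linarith
    show "2 * real \<mu> - 1 \<ge> real \<mu> + 1" using mu by simp
  qed
  show ?thesis using A B C D E by blast
qed

end
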